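(* Let $q\in(0,1]$. Assume: [A5] there exists $\lambda>0$ with $\lim_{x\to0}p(x)/|x|^q=\lambda$; [A7] for every $M>0$, $\sup_{u,v\in\mathbb U_T,\ |u|,|v|<M,\ u\neq v}\frac{|\mathbb H_T(\theta^*+a_Tu)-\mathbb H_T(\theta^*+a_Tv)|}{|u-v|^q}\|G_T^{(00)}\|^q\to0$ in probability as $T\to\infty$. If $\hat u_T=a_T^{-1}(\hat\theta_T-\theta^* )=O_p(1)$ as $T\to\infty$, then $$P\bigl(\hat\theta_T^{(0)}=0\bigr)\to1\quad\text{as }T\to\infty.$$
   Context: Let $\Theta\subset\mathbb R^{\mathsf p}$ be a bounded open set with closure $\overline\Theta$ and $\theta^*\in\Theta$. Let $(\Omega,\mathcal F,P)$ be a probability space, $\mathbb T\subset\mathbb R_{\ge0}$ with $\sup\mathbb T=\infty$; limits $T\to\infty$ are along $\mathbb T$. For each $T\in\mathbb T$, $\mathbb H_T:\Omega\times\overline\Theta\to\mathbb R$ is a random field continuous in $\theta$ for every $\omega$. The penalty is $p_T(\theta)=\sum_{j=1}^{\mathsf p}\xi_T^jp(\theta_j)$ with (possibly random) $\xi_T^j>0$ and $p:\mathbb R\to\mathbb R_{\ge0}$, $p(0)=0$; $\mathbb H^\dagger_T=\mathbb H_T-p_T$, and $\hat\theta_T:\Omega\to\overline\Theta$ is measurable with $\mathbb H^\dagger_T(\hat\theta_T)=\max_{\theta\in\overline\Theta}\mathbb H^\dagger_T(\theta)$. $\mathcal J^{(0)}=\{j:\theta^*_j=0\}$, $\mathcal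 J^{(1)}=\{j:\theta^*_j\ne0\}$; for $x\in\mathbb R^{\mathsf p}$, $x^{(0)}=(x_j)_{j\in\mathcal J^{(0)}}$, and for a matrix $A$, $A^{(00)}=(A_{ij})_{i,j\in\mathcal J^{(0)}}$. $a_T=\mathrm{diag}(\alpha_T^1,\dots,\alpha_T^{\mathsf p})$ is deterministic, invertible, with $\|a_T\|\to0$ ($\|\cdot\|$ the spectral norm). $\mathbb U_T=\{u:\theta^*+a_Tu\in\overline\Theta\}$. $\tilde a_T$ is diagonal with $(\tilde a_T)_{jj}=(\xi_T^j)^{-1/q}$ for $j\in\mathcal J^{(0)}$ and $\alpha_T^j$ for $j\in\mathcal J^{(1)}$; $G_T=a_T^{-1}\tilde a_T$. $X_T=O_p(1)$ means: for every $\epsilon>0$ there exist $\mathcal T\in\mathbb T$, $M>0$ with $P(|X_T|>M)<\epsilon$ for all $T\ge\mathcal T$. *)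

theory Defs
  imports "HOL-Analysis.Analysis" "HOL-Probability.Probability"
begin

definition along :: "real set \<Rightarrow> real filter" where
  "along TT = inf at_top (principal TT)"

definition diag_mat :: "('n::finite \<Rightarrow> real) \<Rightarrow> real^'n^'n" where
  "diag_mat d = (\<chi> i j. if i = j then d i else 0)"

definition spec_norm :: "real^'n::finite^'m::finite \<Rightarrow> real" where
  "spec_norm A = onorm (\<lambda>x. A *v x)"

text \<open>The (00)-block of a square matrix, indices in J0 = {j. \<theta>*_j = 0}; realised as the
  matrix with all entries outside J0 x J0 set to 0 (this has the same spectral norm
  as the submatrix).\<close>
definition block00 :: "real^'n::finite \<Rightarrow> real^'n^'n \<Rightarrow> real^'n^'n" where
  "block00 \<theta>s A = (\<chi> i j. if \<theta>s$i = 0 \<and> \<theta>s$j = 0 then A$i$j else 0)"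

definition a_mat :: "(real \<Rightarrow> 'n::finite \<Rightarrow> real) \<Rightarrow> real \<Rightarrow> real^'n^'n" where
  "a_mat \<alpha> T = diag_mat (\<alpha> T)"

definition atilde_mat :: "real \<Rightarrow> real^'n::finite \<Rightarrow> (real \<Rightarrow> 'n \<Rightarrow> real) \<Rightarrow>
     (real \<Rightarrow> 'a \<Rightarrow> 'n \<Rightarrow> real) \<Rightarrow> real \<Rightarrow> 'a \<Rightarrow> real^'n^'n" where
  "atilde_mat q \<theta>s \<alpha> \<xi> T \<omega> =
     diag_mat (\<lambda>j. if \<theta>s$j = 0 then (\<xi> T \<omega> j) powr (-1/q) else \<alpha> T j)"

definition G_mat :: "real \<Rightarrow> real^'n::finite \<Rightarrow> (real \<Rightarrow> 'n \<Rightarrow> real) \<Rightarrow>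
     (real \<Rightarrow> 'a \<Rightarrow> 'n \<Rightarrow> real) \<Rightarrow> real \<Rightarrow> 'a \<Rightarrow> real^'n^'n" where
  "G_mat q \<theta>s \<alpha> \<xi> T \<omega> = matrix_inv (a_mat \<alpha> T) ** atilde_mat q \<theta>s \<alpha> \<xi> T \<omega>"

definition U_set :: "(real^'n::finite) set \<Rightarrow> real^'n \<Rightarrow> (real \<Rightarrow> 'n \<Rightarrow> real) \<Rightarrow> real \<Rightarrow> (real^'n) set" where
  "U_set \<Theta> \<theta>s \<alpha> T = {u. \<theta>s + a_mat \<alpha> T *v u \<in> closure \<Theta>}"

definition Hdag :: "(real \<Rightarrow> 'a \<Rightarrow> real^'n::finite \<Rightarrow> real) \<Rightarrow> (real \<Rightarrow> 'a \<Rightarrow> 'n \<Rightarrow> real) \<Rightarrow>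
     (real \<Rightarrow> real) \<Rightarrow> real \<Rightarrow> 'a \<Rightarrow> real^'n \<Rightarrow> real" where
  "Hdag H \<xi> p T \<omega> \<theta> = H T \<omega> \<theta> - (\<Sum>j\<in>UNIV. \<xi> T \<omega> j * p (\<theta>$j))"

end

theory Submission imports Defs begin

lemma diag_mult: "diag_mat a ** diag_mat b = diag_mat (\<lambda>j. a j * b j)"
proof -
  have "(\<Sum>k\<in>UNIV. (if i = k then a i else 0) * (if k = j then b k else 0)) = (if i = j then a i * b j else 0)" for i j
    by (cases "i = j") (auto simp: if_distrib[of "\<lambda>x. x * _"] sum.delta cong: if_cong)
  then show ?thesis unfolding diag_mat_def matrix_matrix_mult_def
    by (simp add: vec_eq_iff)
qed

lemma diag_one: "diag_mat (\<lambda>j. 1) = mat 1"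
  unfolding diag_mat_def mat_def by (simp add: vec_eq_iff)

lemma diag_inv:
  assumes "\<And>j. d j \<noteq> 0"
  shows "matrix_inv (diag_mat d) = diag_mat (\<lambda>j. 1 / d j)"
proof -
  let ?D = "diag_mat (\<lambda>j. 1 / d j)"
  have ex: "diag_mat d ** ?D = mat 1 \<and> ?D ** diag_mat d = mat 1"
    using assms by (simp add: diag_mult diag_one[symmetric])
  define B where "B = matrix_inv (diag_mat d)"
  have B: "diag_mat d ** B = mat 1 \<and> B ** diag_mat d = mat 1"
    unfolding B_def matrix_inv_def by (rule someI, rule ex)
  have "B = B ** (diag_mat d ** ?D)" using ex by (simp add: matrix_mul_rid)
  also have "\<dots> = (B ** diag_mat d) ** ?D" by (simp add: matrix_mul_assoc)
  also have "\<dots> = ?D" using B by (simp add: matrix_mul_lid)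
  finally show ?thesis unfolding B_def .
qed

lemma diag_mv: "diag_mat d *v x = (\<chi> j. d j * x$j)"
proof -
  have "(\<Sum>k\<in>UNIV. (if i = k then d i else 0) * x$k) = d i * x$i" for i
    by (auto simp: if_distrib[of "\<lambda>x. x * _"] sum.delta cong: if_cong)
  then show ?thesis unfolding diag_mat_def matrix_vector_mult_def
    by (simp add: vec_eq_iff)
qed

lemma block00_diag: "block00 \<theta>s (diag_mat d) = diag_mat (\<lambda>j. if \<theta>s$j = 0 then d j else 0)"
  unfolding block00_def diag_mat_def by (simp add: vec_eq_iff)

lemma spec_norm_diag_ge: "\<bar>d j\<bar> \<le> spec_norm (diag_mat d)"
proof -
  have bl: "bounded_linear (\<lambda>x. diag_mat d *v x)" by (simp add: matrix_vector_mul_bounded_linear)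
  have "norm (diag_mat d *v axis j 1) \<le> spec_norm (diag_mat d) * norm (axis j (1::real))"
    unfolding spec_norm_def by (rule onorm[OF bl])
  moreover have "diag_mat d *v axis j 1 = axis j (d j)"
    by (simp add: diag_mv axis_def vec_eq_iff)
  moreover have "axis j (d j) = d j *\<^sub>R axis j (1::real)"
    by (simp add: axis_def vec_eq_iff)
  ultimately show ?thesis by simp
qed

lemma spec_norm_diag: "spec_norm (diag_mat d) = Max (range (\<lambda>j. \<bar>d j\<bar>))"
proof (rule antisym)
  let ?m = "Max (range (\<lambda>j. \<bar>d j\<bar>))"
  have m: "\<bar>d j\<bar> \<le> ?m" for j by (rule Max_ge) auto
  show "spec_norm (diag_mat d) \<le> ?m"
    unfolding spec_norm_def
  proof (rule onorm_le)
    fix x :: "real^'a"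
    have "(norm (diag_mat d *v x))^2 = (\<Sum>j\<in>UNIV. (d j * x$j)^2)"
      by (simp add: diag_mv norm_vec_def L2_set_def sum_nonneg)
    also have "\<dots> \<le> (\<Sum>j\<in>UNIV. ?m^2 * (x$j)^2)"
    proof (rule sum_mono)
      fix j
      have "\<bar>d j\<bar>^2 \<le> ?m^2" using m[of j] by (intro power_mono) auto
      then show "(d j * x$j)^2 \<le> ?m^2 * (x$j)^2"
        by (simp add: power_mult_distrib mult_right_mono)
    qed
    also have "\<dots> = (?m * norm x)^2"
      by (simp add: norm_vec_def L2_set_def power_mult_distrib sum_distrib_left sum_nonneg)
    finally have "(norm (diag_mat d *v x))^2 \<le> (?m * norm x)^2" .
    moreover have "0 \<le> ?m * norm x" using m[of undefined] by (meson abs_ge_zero norm_ge_zero order_trans zero_le_mult_iff)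
    ultimately show "norm (diag_mat d *v x) \<le> ?m * norm x"
      using power2_le_imp_le by blast
  qed
  show "?m \<le> spec_norm (diag_mat d)"
    using spec_norm_diag_ge by (intro Max.boundedI) auto
qed


lemma sup_meas:
  fixes X :: "('b::{metric_space,second_countable_topology}) set" and f :: "'a \<Rightarrow> 'b \<Rightarrow> real"
  assumes cont: "\<And>\<omega>. continuous_on X (f \<omega>)"
    and meas: "\<And>x. x \<in> X \<Longrightarrow> (\<lambda>\<omega>. f \<omega> x) \<in> borel_measurable M"
  shows "(\<lambda>\<omega>. SUP x\<in>X. ereal (f \<omega> x)) \<in> borel_measurable M"
proof -
  obtain D where D: "countable D" "D \<subseteq> X" "X \<subseteq> closure D" by (rule separable)
  have eq: "(SUP x\<in>X. ereal (f \<omega> x)) = (SUP x\<in>D. ereal (f \<omega> x))" for \<omega>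
  proof (rule antisym)
    show "(SUP x\<in>D. ereal (f \<omega> x)) \<le> (SUP x\<in>X. ereal (f \<omega> x))"
      using D(2) by (rule SUP_subset_mono) simp
    show "(SUP x\<in>X. ereal (f \<omega> x)) \<le> (SUP x\<in>D. ereal (f \<omega> x))"
    proof (rule SUP_least)
      fix x assume x: "x \<in> X"
      then have "x \<in> closure D" using D by auto
      then obtain s where s: "\<And>n. s n \<in> D" "s \<longlonglongrightarrow> x"
        unfolding closure_sequential by blast
      have "((f \<omega> \<circ> s) \<longlonglongrightarrow> f \<omega> x)"
        using cont[of \<omega>] x s D(2) unfolding continuous_on_sequentially by blast
      then have "(\<lambda>n. ereal (f \<omega> (s n))) \<longlonglongrightarrow> ereal (f \<omega> x)"
        by (intro tendsto_ereal) (simp add: o_def)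
      then show "ereal (f \<omega> x) \<le> (SUP x\<in>D. ereal (f \<omega> x))"
        by (rule LIMSEQ_le_const2) (intro exI allI impI SUP_upper s(1))
    qed
  qed
  show ?thesis unfolding eq
    by (rule borel_measurable_SUP) (use D meas in auto)
qed

lemma pointwise:
  fixes \<theta>h \<theta>s :: "real^'n::finite" and \<alpha> \<xi> :: "'n \<Rightarrow> real" and Hf :: "real^'n \<Rightarrow> real"
    and p :: "real \<Rightarrow> real"
  assumes \<alpha>: "\<And>j. \<alpha> j \<noteq> 0" and \<xi>: "\<And>j. \<xi> j > 0" and q: "0 < q" "q \<le> 1"
    and pnn: "\<And>x. p x \<ge> 0" and p0: "p 0 = 0"
    and mx: "\<And>\<theta>. \<theta> \<in> closure \<Theta> \<Longrightarrow> Hf \<theta> - (\<Sum>j\<in>UNIV. \<xi> j * p (\<theta>$j)) \<le> Hf \<theta>h - (\<Sum>j\<in>UNIV. \<xi> j * p (\<theta>h$j))"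
    and \<theta>h: "\<theta>h \<in> closure \<Theta>"
    and ball: "ball \<theta>s r \<subseteq> \<Theta>" and dr: "norm (\<theta>h - \<theta>s) < r" and dd: "norm (\<theta>h - \<theta>s) < \<delta>"
    and p\<delta>: "\<And>x. x \<noteq> 0 \<Longrightarrow> \<bar>x\<bar> < \<delta> \<Longrightarrow> p x > lam/2 * \<bar>x\<bar> powr q"
    and lam: "lam > 0"
    and bnd: "\<And>u v. \<theta>s + diag_mat \<alpha> *v u \<in> closure \<Theta> \<Longrightarrow> \<theta>s + diag_mat \<alpha> *v v \<in> closure \<Theta>
        \<Longrightarrow> norm u < Mb \<Longrightarrow> norm v < Mb \<Longrightarrow> u \<noteq> v \<Longrightarrow>
        \<bar>Hf (\<theta>s + diag_mat \<alpha> *v u) - Hf (\<theta>s + diag_mat \<alpha> *v v)\<bar> / norm (u - v) powr q * c powr q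
          \<le> lam / (2 * real CARD('n) powr q)"
    and cge: "\<And>j. \<theta>s$j = 0 \<Longrightarrow> \<bar>1 / \<alpha> j * \<xi> j powr (-1/q)\<bar> \<le> c"
    and uh: "norm (\<chi> j. (\<theta>h$j - \<theta>s$j) / \<alpha> j) < Mb"
  shows "\<forall>j. \<theta>s$j = 0 \<longrightarrow> \<theta>h$j = 0"
proof (rule ccontr)
  assume "\<not> ?thesis"
  then obtain j0 where j0: "\<theta>s$j0 = 0" "\<theta>h$j0 \<noteq> 0" by blast
  define J0 where "J0 = {j. \<theta>s$j = 0}"
  define aw where "aw j = \<bar>\<theta>h$j / \<alpha> j\<bar>" for j
  have J0: "finite J0" "J0 \<noteq> {}" using j0 unfolding J0_def by auto
  have "Max (aw ` J0) \<in> aw ` J0" using J0 by simp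
  then obtain m where m: "m \<in> J0" "aw m = Max (aw ` J0)"
    by (metis imageE)
  have awle: "aw j \<le> aw m" if "j \<in> J0" for j using m that J0 by auto
  have "aw j0 > 0" using j0 \<alpha> unfolding aw_def by auto
  then have awm: "aw m > 0" using awle[of j0] j0 unfolding J0_def by auto
  have m0: "\<theta>s$m = 0" using m unfolding J0_def by auto
  have hm: "\<theta>h$m \<noteq> 0" using awm unfolding aw_def by auto
  define \<theta>t where "\<theta>t = (\<chi> j. if \<theta>s$j = 0 then 0 else \<theta>h$j)"
  define uh where "uh = (\<chi> j. (\<theta>h$j - \<theta>s$j) / \<alpha> j)"
  define ut where "ut = (\<chi> j. (\<theta>t$j - \<theta>s$j) / \<alpha> j)"
  have eh: "\<theta>s + diag_mat \<alpha> *v uh = \<theta>h" using \<alpha> by (simp add: uh_def diag_mv vec_eq_iff)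
  have et: "\<theta>s + diag_mat \<alpha> *v ut = \<theta>t" using \<alpha> by (simp add: ut_def diag_mv vec_eq_iff)
  have "norm (\<theta>t - \<theta>s) \<le> norm (\<theta>h - \<theta>s)"
    by (rule norm_le_componentwise_cart) (simp add: \<theta>t_def)
  then have "\<theta>t \<in> \<Theta>" using ball dr by (auto simp: dist_norm norm_minus_commute)
  then have \<theta>t: "\<theta>t \<in> closure \<Theta>" using closure_subset by blast
  have "norm ut \<le> norm uh"
    by (rule norm_le_componentwise_cart) (simp add: \<theta>t_def ut_def uh_def)
  then have ut: "norm ut < Mb" using uh unfolding uh_def by simp
  have ne: "uh \<noteq> ut"
  proof
    assume "uh = ut"
    then have "uh$j0 = ut$j0" by simp
    then show False using j0 \<alpha>[of j0] by (simp add: uh_def ut_def \<theta>t_def)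
  qed
  define N where "N = norm (uh - ut)"
  have Npos: "N > 0" using ne unfolding N_def by simp
  define dH where "dH = \<bar>Hf \<theta>h - Hf \<theta>t\<bar>"
  define eps where "eps = lam / (2 * real CARD('n) powr q)"
  have b: "dH / N powr q * c powr q \<le> eps"
    using bnd[of uh ut] eh et \<theta>h \<theta>t uh ut ne unfolding dH_def N_def eps_def uh_def by simp
  have cm: "\<bar>1 / \<alpha> m * \<xi> m powr (-1/q)\<bar> \<le> c" using cge m0 by simp
  have cpos: "c > 0" using cm \<alpha>[of m] \<xi>[of m] by (smt (verit) abs_le_zero_iff divide_eq_0_iff mult_eq_0_iff powr_gt_zero)
  define K where "K = lam/2 * \<bar>\<theta>h$m\<bar> powr q * \<xi> m"
  have "\<bar>\<theta>h$m\<bar> < \<delta>" using dd component_le_norm_cart[of "\<theta>h - \<theta>s" m] m0 by simp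
  then have a: "\<xi> m * p (\<theta>h$m) > K" using p\<delta>[OF hm] \<xi>[of m] unfolding K_def
    by (simp add: mult.commute)
  have "\<xi> m * p (\<theta>h$m) \<le> (\<Sum>j\<in>UNIV. \<xi> j * p (\<theta>h$j) - \<xi> j * p (\<theta>t$j))"
  proof -
    have nn: "0 \<le> \<xi> j * p (\<theta>h$j) - \<xi> j * p (\<theta>t$j)" for j
      using pnn[of "\<theta>h$j"] \<xi>[of j] by (simp add: \<theta>t_def p0)
    have "\<xi> m * p (\<theta>h$m) = \<xi> m * p (\<theta>h$m) - \<xi> m * p (\<theta>t$m)" using m0 by (simp add: \<theta>t_def p0)
    also have "\<dots> \<le> (\<Sum>j\<in>UNIV. \<xi> j * p (\<theta>h$j) - \<xi> j * p (\<theta>t$j))"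
      by (rule member_le_sum) (use nn in auto)
    finally show ?thesis .
  qed
  also have "\<dots> \<le> Hf \<theta>h - Hf \<theta>t" using mx[OF \<theta>t] by (simp add: sum_subtractf)
  also have "\<dots> \<le> dH" unfolding dH_def by simp
  finally have b2: "\<xi> m * p (\<theta>h$m) \<le> dH" .
  have c: "dH \<le> eps * N powr q / c powr q"
    using b Npos cpos by (simp add: field_simps)
  have "N \<le> (\<Sum>j\<in>UNIV. \<bar>(uh - ut)$j\<bar>)" unfolding N_def by (rule norm_le_l1_cart)
  also have "\<dots> \<le> (\<Sum>j\<in>(UNIV::'n set). aw m)"
  proof (rule sum_mono)
    fix j
    show "\<bar>(uh - ut)$j\<bar> \<le> aw m"
      using awle[of j] awm by (auto simp: uh_def ut_def \<theta>t_def aw_def J0_def diff_divide_distrib)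
  qed
  also have "\<dots> = real CARD('n) * aw m" by simp
  finally have NB: "N \<le> real CARD('n) * aw m" .
  have d: "N powr q \<le> real CARD('n) powr q * aw m powr q"
    using powr_mono2[OF _ _ NB, of q] q Npos by (simp add: powr_mult)
  have e: "c powr q \<ge> 1 / (\<bar>\<alpha> m\<bar> powr q * \<xi> m)"
  proof -
    have "\<bar>1 / \<alpha> m * \<xi> m powr (-1/q)\<bar> powr q \<le> c powr q"
      using powr_mono2[OF _ _ cm, of q] q by simp
    moreover have "\<bar>1 / \<alpha> m * \<xi> m powr (-1/q)\<bar> powr q = 1 / (\<bar>\<alpha> m\<bar> powr q * \<xi> m)"
    proof -
      have "\<bar>1 / \<alpha> m * \<xi> m powr (-1/q)\<bar> = (1/\<bar>\<alpha> m\<bar>) * \<xi> m powr (-1/q)"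
        using \<xi>[of m] by (simp add: abs_mult)
      moreover have "((1/\<bar>\<alpha> m\<bar>) * \<xi> m powr (-1/q)) powr q = (1/\<bar>\<alpha> m\<bar>) powr q * (\<xi> m powr (-1/q)) powr q"
        by (rule powr_mult)
      moreover have "(\<xi> m powr (-1/q)) powr q = 1 / \<xi> m"
      proof -
        have "(\<xi> m powr (-1/q)) powr q = \<xi> m powr (-1/q*q)" by (rule powr_powr)
        also have "\<dots> = \<xi> m powr (-1)" using q by simp
        also have "\<dots> = 1 / \<xi> m" using \<xi>[of m] by (simp add: powr_minus divide_inverse)
        finally show ?thesis .
      qed
      moreover have "(1/\<bar>\<alpha> m\<bar>) powr q = 1 / \<bar>\<alpha> m\<bar> powr q"
        using \<alpha>[of m] by (simp add: powr_divide)
      ultimately show ?thesis by simp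
    qed
    ultimately show ?thesis by simp
  qed
  have "dH \<le> eps * N powr q / c powr q" by (rule c)
  also have "\<dots> \<le> eps * (real CARD('n) powr q * aw m powr q) * (\<bar>\<alpha> m\<bar> powr q * \<xi> m)"
  proof -
    have epos: "eps > 0" using lam unfolding eps_def by simp
    have "eps * N powr q / c powr q \<le> eps * (real CARD('n) powr q * aw m powr q) / c powr q"
      using d epos cpos by (simp add: divide_right_mono)
    also have "\<dots> \<le> eps * (real CARD('n) powr q * aw m powr q) * (\<bar>\<alpha> m\<bar> powr q * \<xi> m)"
    proof -
      have pos: "0 \<le> eps * (real CARD('n) powr q * aw m powr q)" using epos by simp
      have ap: "\<bar>\<alpha> m\<bar> powr q * \<xi> m > 0" using \<alpha>[of m] \<xi>[of m] by simp
      have "1 / c powr q \<le> \<bar>\<alpha> m\<bar> powr q * \<xi> m"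
        using e ap cpos by (simp add: field_simps)
      then show ?thesis using pos
        by (metis mult_left_mono times_divide_eq_right mult_1_right)
    qed
    finally show ?thesis .
  qed
  also have "\<dots> = K"
  proof -
    have "aw m powr q = \<bar>\<theta>h$m\<bar> powr q / \<bar>\<alpha> m\<bar> powr q"
      unfolding aw_def by (simp add: abs_divide powr_divide)
    moreover have "real CARD('n) powr q > 0" by simp
    moreover have "\<bar>\<alpha> m\<bar> powr q > 0" using \<alpha>[of m] by simp
    ultimately show ?thesis unfolding eps_def K_def by (simp add: field_simps)
  qed
  finally show False using a b2 by simp
qed

theorem theorem2:
  fixes M :: "'a measure"
    and \<Theta> :: "(real^'n::finite) set"
    and \<theta>s :: "real^'n"
    and TT :: "real set"
    and H :: "real \<Rightarrow> 'a \<Rightarrow> real^'n \<Rightarrow> real"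
    and \<xi> :: "real \<Rightarrow> 'a \<Rightarrow> 'n \<Rightarrow> real"
    and p :: "real \<Rightarrow> real"
    and \<alpha> :: "real \<Rightarrow> 'n \<Rightarrow> real"
    and \<theta>hat :: "real \<Rightarrow> 'a \<Rightarrow> real^'n"
    and q :: real
  assumes P: "prob_space M"
    and \<Theta>: "bounded \<Theta>" "open \<Theta>" "\<theta>s \<in> \<Theta>"
    and TT: "TT \<subseteq> {0..}" "\<forall>x. \<exists>T\<in>TT. x < T"
    and H_cont: "\<And>T \<omega>. continuous_on (closure \<Theta>) (H T \<omega>)"
    and H_meas: "\<And>T \<theta>. \<theta> \<in> closure \<Theta> \<Longrightarrow> (\<lambda>\<omega>. H T \<omega> \<theta>) \<in> borel_measurable M"
    and \<xi>_pos: "\<And>T \<omega> j. \<xi> T \<omega> j > 0"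
    and \<xi>_meas: "\<And>T j. (\<lambda>\<omega>. \<xi> T \<omega> j) \<in> borel_measurable M"
    and p_nonneg: "\<And>x. p x \<ge> 0" and p0: "p 0 = 0"
    and \<theta>hat_meas: "\<And>T. \<theta>hat T \<in> borel_measurable M"
    and \<theta>hat_in: "\<And>T \<omega>. \<theta>hat T \<omega> \<in> closure \<Theta>"
    and \<theta>hat_max: "\<And>T \<omega> \<theta>. \<theta> \<in> closure \<Theta> \<Longrightarrow> Hdag H \<xi> p T \<omega> \<theta> \<le> Hdag H \<xi> p T \<omega> (\<theta>hat T \<omega>)"
    and \<alpha>_nz: "\<And>T j. \<alpha> T j \<noteq> 0"
    and a_lim: "((\<lambda>T. spec_norm (a_mat \<alpha> T)) \<longlongrightarrow> 0) (along TT)"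
    and q: "0 < q" "q \<le> 1"
    and A5: "\<exists>lam>0. ((\<lambda>x. p x / \<bar>x\<bar> powr q) \<longlongrightarrow> lam) (at 0)"
    and A7: "\<And>Mb \<epsilon>. Mb > 0 \<Longrightarrow> \<epsilon> > 0 \<Longrightarrow>
      ((\<lambda>T. measure M {\<omega> \<in> space M.
          (SUP uv \<in> {(u, v). u \<in> U_set \<Theta> \<theta>s \<alpha> T \<and> v \<in> U_set \<Theta> \<theta>s \<alpha> T \<and>
                             norm u < Mb \<and> norm v < Mb \<and> u \<noteq> v}.
             ereal (\<bar>H T \<omega> (\<theta>s + a_mat \<alpha> T *v fst uv) - H T \<omega> (\<theta>s + a_mat \<alpha> T *v snd uv)\<bar>
                    / norm (fst uv - snd uv) powr q
                    * spec_norm (block00 \<theta>s (G_mat q \<theta>s \<alpha> \<xi> T \<omega>)) powr q))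
          > ereal \<epsilon>}) \<longlongrightarrow> 0) (along TT)"
    and Op: "\<forall>\<epsilon>>0. \<exists>T0\<in>TT. \<exists>Mb>0. \<forall>T\<in>TT. T \<ge> T0 \<longrightarrow>
      measure M {\<omega> \<in> space M. norm (matrix_inv (a_mat \<alpha> T) *v (\<theta>hat T \<omega> - \<theta>s)) > Mb} < \<epsilon>"
  shows "((\<lambda>T. measure M {\<omega> \<in> space M. \<forall>j. \<theta>s$j = 0 \<longrightarrow> \<theta>hat T \<omega> $ j = 0}) \<longlongrightarrow> 1) (along TT)"
proof -
  interpret prob_space M by (rule P)
  note [measurable] = \<theta>hat_meas \<xi>_meas
  have Ainv: "matrix_inv (a_mat \<alpha> T) = diag_mat (\<lambda>j. 1 / \<alpha> T j)" for T
    unfolding a_mat_def by (rule diag_inv) (rule \<alpha>_nz)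
  have uhat_eq: "matrix_inv (a_mat \<alpha> T) *v (\<theta>hat T \<omega> - \<theta>s) = (\<chi> j. (\<theta>hat T \<omega> $ j - \<theta>s $ j) / \<alpha> T j)" for T \<omega>
    by (simp add: Ainv diag_mv vec_eq_iff)
  have Gdiag: "block00 \<theta>s (G_mat q \<theta>s \<alpha> \<xi> T \<omega>) =
      diag_mat (\<lambda>j. if \<theta>s$j = 0 then 1 / \<alpha> T j * \<xi> T \<omega> j powr (-1/q) else 0)" for T \<omega>
    unfolding G_mat_def Ainv atilde_mat_def diag_mult block00_diag
    by (rule arg_cong[where f=diag_mat]) auto
  define cf where "cf T \<omega> = spec_norm (block00 \<theta>s (G_mat q \<theta>s \<alpha> \<xi> T \<omega>))" for T \<omega>
  have cge: "\<bar>1 / \<alpha> T j * \<xi> T \<omega> j powr (-1/q)\<bar> \<le> cf T \<omega>" if "\<theta>s$j = 0" for T \<omega> j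
    using spec_norm_diag_ge[of "\<lambda>j. if \<theta>s$j = 0 then 1 / \<alpha> T j * \<xi> T \<omega> j powr (-1/q) else 0" j] that
    unfolding cf_def Gdiag by simp
  have cf_meas: "(\<lambda>\<omega>. cf T \<omega>) \<in> borel_measurable M" for T
    unfolding cf_def Gdiag spec_norm_diag by measurable

  have Smeas: "{\<omega> \<in> space M.
          (SUP uv \<in> {(u, v). u \<in> U_set \<Theta> \<theta>s \<alpha> T \<and> v \<in> U_set \<Theta> \<theta>s \<alpha> T \<and>
                             norm u < Mb \<and> norm v < Mb \<and> u \<noteq> v}.
             ereal (\<bar>H T \<omega> (\<theta>s + a_mat \<alpha> T *v fst uv) - H T \<omega> (\<theta>s + a_mat \<alpha> T *v snd uv)\<bar>
                    / norm (fst uv - snd uv) powr q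
                    * spec_norm (block00 \<theta>s (G_mat q \<theta>s \<alpha> \<xi> T \<omega>)) powr q))
          > ereal \<epsilon>} \<in> sets M" for T Mb \<epsilon>
  proof -
    define X where "X = {(u, v). u \<in> U_set \<Theta> \<theta>s \<alpha> T \<and> v \<in> U_set \<Theta> \<theta>s \<alpha> T \<and>
                             norm u < Mb \<and> norm v < Mb \<and> u \<noteq> v}"
    define f where "f \<omega> uv = \<bar>H T \<omega> (\<theta>s + a_mat \<alpha> T *v fst uv) - H T \<omega> (\<theta>s + a_mat \<alpha> T *v snd uv)\<bar>
                    / norm (fst uv - snd uv) powr q * cf T \<omega> powr q" for \<omega> uv
    have XU: "\<theta>s + a_mat \<alpha> T *v fst uv \<in> closure \<Theta>" "\<theta>s + a_mat \<alpha> T *v snd uv \<in> closure \<Theta>"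
      "fst uv \<noteq> snd uv" if "uv \<in> X" for uv
      using that unfolding X_def U_set_def by auto
    have cont: "continuous_on X (f \<omega>)" for \<omega>
    proof -
      have l1: "continuous_on X (\<lambda>x. a_mat \<alpha> T *v fst x)"
        by (rule continuous_on_compose2[of UNIV "(*v) (a_mat \<alpha> T)"]) (auto intro: continuous_intros)
      have l2: "continuous_on X (\<lambda>x. a_mat \<alpha> T *v snd x)"
        by (rule continuous_on_compose2[of UNIV "(*v) (a_mat \<alpha> T)"]) (auto intro: continuous_intros)
      have c1: "continuous_on X (\<lambda>uv. H T \<omega> (\<theta>s + a_mat \<alpha> T *v fst uv))"
        by (rule continuous_on_compose2[OF H_cont]) (use XU l1 l2 in \<open>auto intro!: continuous_intros\<close>)
      have c2: "continuous_on X (\<lambda>uv. H T \<omega> (\<theta>s + a_mat \<alpha> T *v snd uv))"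
        by (rule continuous_on_compose2[OF H_cont]) (use XU l1 l2 in \<open>auto intro!: continuous_intros\<close>)
      show ?thesis unfolding f_def
        by (intro continuous_intros c1 c2) (use XU in auto)
    qed
    have meas: "(\<lambda>\<omega>. f \<omega> uv) \<in> borel_measurable M" if "uv \<in> X" for uv
    proof -
      note [measurable] = H_meas[OF XU(1)[OF that]] H_meas[OF XU(2)[OF that]] cf_meas
      show ?thesis unfolding f_def by measurable
    qed
    have "(\<lambda>\<omega>. SUP uv\<in>X. ereal (f \<omega> uv)) \<in> borel_measurable M"
      by (rule sup_meas[OF cont meas])
    then show ?thesis unfolding X_def f_def cf_def by measurable
  qed

  define bad where "bad T = {\<omega> \<in> space M. \<exists>j. \<theta>s$j = 0 \<and> \<theta>hat T \<omega> $ j \<noteq> 0}" for T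
  have bad_meas: "bad T \<in> sets M" for T
  proof -
    have [measurable]: "(\<lambda>\<omega>. \<theta>hat T \<omega> $ j) \<in> borel_measurable M" for j
      by (rule borel_measurable_continuous_on[OF _ \<theta>hat_meas]) (intro continuous_intros)
    show ?thesis unfolding bad_def by measurable
  qed
  have good_eq: "{\<omega> \<in> space M. \<forall>j. \<theta>s$j = 0 \<longrightarrow> \<theta>hat T \<omega> $ j = 0} = space M - bad T" for T
    by (auto simp: bad_def)
  have lim0: "((\<lambda>T. measure M (bad T)) \<longlongrightarrow> 0) (along TT)"
  proof (rule order_tendstoI)
    fix a :: real assume "a < 0"
    then show "eventually (\<lambda>T. a < measure M (bad T)) (along TT)"
      by (intro always_eventually) (auto intro: less_le_trans[OF _ measure_nonneg])
  next
    fix e :: real assume e: "0 < e"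
    then obtain T0 Mb where T0: "T0 \<in> TT" "Mb > 0" and
      T0b: "\<And>T. T \<in> TT \<Longrightarrow> T \<ge> T0 \<Longrightarrow>
        measure M {\<omega> \<in> space M. norm (matrix_inv (a_mat \<alpha> T) *v (\<theta>hat T \<omega> - \<theta>s)) > Mb} < e/2"
      using Op[rule_format, of "e/2"] by auto
    obtain lam where lam: "lam > 0" and lim: "((\<lambda>x. p x / \<bar>x\<bar> powr q) \<longlongrightarrow> lam) (at 0)"
      using A5 by auto
    have "eventually (\<lambda>x. lam/2 < p x / \<bar>x\<bar> powr q) (at 0)"
      using order_tendstoD(1)[OF lim, of "lam/2"] lam by linarith
    then obtain \<delta> where \<delta>: "\<delta> > 0" and \<delta>b: "\<And>x. x \<noteq> 0 \<Longrightarrow> dist x 0 < \<delta> \<Longrightarrow> lam/2 < p x / \<bar>x\<bar> powr q"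
      unfolding eventually_at by auto
    have p\<delta>: "p x > lam/2 * \<bar>x\<bar> powr q" if "x \<noteq> 0" "\<bar>x\<bar> < \<delta>" for x
    proof -
      have "lam/2 < p x / \<bar>x\<bar> powr q" using \<delta>b[of x] that by simp
      moreover have "\<bar>x\<bar> powr q > 0" using that by simp
      ultimately show ?thesis by (simp add: pos_less_divide_eq)
    qed
    obtain r where r: "r > 0" "ball \<theta>s r \<subseteq> \<Theta>" using \<Theta> open_contains_ball by blast
    define eps where "eps = lam / (2 * real CARD('n) powr q)"
    have eps: "eps > 0" using lam unfolding eps_def by simp
    have ev1: "eventually (\<lambda>T. measure M {\<omega> \<in> space M.
          (SUP uv \<in> {(u, v). u \<in> U_set \<Theta> \<theta>s \<alpha> T \<and> v \<in> U_set \<Theta> \<theta>s \<alpha> T \<and>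
                             norm u < Mb + 1 \<and> norm v < Mb + 1 \<and> u \<noteq> v}.
             ereal (\<bar>H T \<omega> (\<theta>s + a_mat \<alpha> T *v fst uv) - H T \<omega> (\<theta>s + a_mat \<alpha> T *v snd uv)\<bar>
                    / norm (fst uv - snd uv) powr q
                    * spec_norm (block00 \<theta>s (G_mat q \<theta>s \<alpha> \<xi> T \<omega>)) powr q))
          > ereal eps} < e/2) (along TT)"
      by (rule order_tendstoD(2)[OF A7[of "Mb+1" eps]]) (use T0 eps e in auto)
    have ev2: "eventually (\<lambda>T. spec_norm (a_mat \<alpha> T) < min r \<delta> / Mb) (along TT)"
      using order_tendstoD(2)[OF a_lim] r \<delta> T0 by simp
    have ev3: "eventually (\<lambda>T. T \<in> TT \<and> T \<ge> T0) (along TT)"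
      unfolding along_def eventually_inf_principal
      by (rule eventually_mono[OF eventually_ge_at_top[of T0]]) auto
    show "eventually (\<lambda>T. measure M (bad T) < e) (along TT)"
      using ev1 ev2 ev3
    proof eventually_elim
      case (elim T)
      define Aset where "Aset = {\<omega> \<in> space M. norm (matrix_inv (a_mat \<alpha> T) *v (\<theta>hat T \<omega> - \<theta>s)) > Mb}"
      define Bset where "Bset = {\<omega> \<in> space M.
          (SUP uv \<in> {(u, v). u \<in> U_set \<Theta> \<theta>s \<alpha> T \<and> v \<in> U_set \<Theta> \<theta>s \<alpha> T \<and>
                             norm u < Mb + 1 \<and> norm v < Mb + 1 \<and> u \<noteq> v}.
             ereal (\<bar>H T \<omega> (\<theta>s + a_mat \<alpha> T *v fst uv) - H T \<omega> (\<theta>s + a_mat \<alpha> T *v snd uv)\<bar>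
                    / norm (fst uv - snd uv) powr q
                    * spec_norm (block00 \<theta>s (G_mat q \<theta>s \<alpha> \<xi> T \<omega>)) powr q))
          > ereal eps}"
      have Bmeas: "Bset \<in> sets M" unfolding Bset_def by (rule Smeas)
      have Ameas: "Aset \<in> sets M"
      proof -
        have [measurable]: "(\<lambda>\<omega>. norm (matrix_inv (a_mat \<alpha> T) *v (\<theta>hat T \<omega> - \<theta>s))) \<in> borel_measurable M"
          by (rule borel_measurable_continuous_on[OF _ \<theta>hat_meas], intro continuous_on_norm,
              rule continuous_on_compose2[of UNIV "(*v) (matrix_inv (a_mat \<alpha> T))"]) (auto intro: continuous_intros)
        show ?thesis unfolding Aset_def by measurable
      qed
      have snn: "spec_norm (a_mat \<alpha> T) \<ge> 0"
        unfolding spec_norm_def by (rule onorm_pos_le[OF matrix_vector_mul_bounded_linear])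
      have sub: "bad T \<subseteq> Aset \<union> Bset"
      proof
        fix \<omega> assume \<omega>: "\<omega> \<in> bad T"
        show "\<omega> \<in> Aset \<union> Bset"
        proof (rule ccontr)
          assume "\<omega> \<notin> Aset \<union> Bset"
          moreover have sp: "\<omega> \<in> space M" using \<omega> by (simp add: bad_def)
          ultimately have nA: "norm (matrix_inv (a_mat \<alpha> T) *v (\<theta>hat T \<omega> - \<theta>s)) \<le> Mb"
            and nB: "\<not> (SUP uv \<in> {(u, v). u \<in> U_set \<Theta> \<theta>s \<alpha> T \<and> v \<in> U_set \<Theta> \<theta>s \<alpha> T \<and>
                             norm u < Mb + 1 \<and> norm v < Mb + 1 \<and> u \<noteq> v}.
             ereal (\<bar>H T \<omega> (\<theta>s + a_mat \<alpha> T *v fst uv) - H T \<omega> (\<theta>s + a_mat \<alpha> T *v snd uv)\<bar>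
                    / norm (fst uv - snd uv) powr q
                    * spec_norm (block00 \<theta>s (G_mat q \<theta>s \<alpha> \<xi> T \<omega>)) powr q))
          > ereal eps"
            unfolding Aset_def Bset_def by auto
          define uh where "uh = matrix_inv (a_mat \<alpha> T) *v (\<theta>hat T \<omega> - \<theta>s)"
          have "a_mat \<alpha> T *v uh = \<theta>hat T \<omega> - \<theta>s"
            unfolding uh_def uhat_eq using \<alpha>_nz by (simp add: a_mat_def diag_mv vec_eq_iff)
          then have "norm (\<theta>hat T \<omega> - \<theta>s) \<le> spec_norm (a_mat \<alpha> T) * norm uh"
            unfolding spec_norm_def by (metis onorm[OF matrix_vector_mul_bounded_linear])
          also have "\<dots> \<le> spec_norm (a_mat \<alpha> T) * Mb"
            using nA snn unfolding uh_def by (simp add: mult_left_mono)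
          also have "\<dots> < min r \<delta>"
            using elim(2) T0(2) by (simp add: pos_less_divide_eq)
          finally have nrm: "norm (\<theta>hat T \<omega> - \<theta>s) < min r \<delta>" .
          have "\<forall>j. \<theta>s$j = 0 \<longrightarrow> \<theta>hat T \<omega> $ j = 0"
          proof (rule pointwise[where \<alpha>="\<alpha> T" and \<xi>="\<xi> T \<omega>" and Hf="H T \<omega>" and p=p and \<Theta>=\<Theta>
                and r=r and \<delta>=\<delta> and lam=lam and Mb="Mb+1" and c="cf T \<omega>" and q=q])
            show "\<And>j. \<alpha> T j \<noteq> 0" by (rule \<alpha>_nz)
            show "\<And>j. \<xi> T \<omega> j > 0" by (rule \<xi>_pos)
            show "0 < q" "q \<le> 1" using q by auto
            show "\<And>x. p x \<ge> 0" by (rule p_nonneg)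
            show "p 0 = 0" by (rule p0)
            show "\<And>\<theta>. \<theta> \<in> closure \<Theta> \<Longrightarrow> H T \<omega> \<theta> - (\<Sum>j\<in>UNIV. \<xi> T \<omega> j * p (\<theta>$j))
                \<le> H T \<omega> (\<theta>hat T \<omega>) - (\<Sum>j\<in>UNIV. \<xi> T \<omega> j * p (\<theta>hat T \<omega> $ j))"
              using \<theta>hat_max unfolding Hdag_def by blast
            show "\<theta>hat T \<omega> \<in> closure \<Theta>" by (rule \<theta>hat_in)
            show "ball \<theta>s r \<subseteq> \<Theta>" by (rule r)
            show "norm (\<theta>hat T \<omega> - \<theta>s) < r" "norm (\<theta>hat T \<omega> - \<theta>s) < \<delta>" using nrm by auto
            show "\<And>x. x \<noteq> 0 \<Longrightarrow> \<bar>x\<bar> < \<delta> \<Longrightarrow> p x > lam/2 * \<bar>x\<bar> powr q" by (rule p\<delta>)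
            show "lam > 0" by (rule lam)
            show "\<And>j. \<theta>s$j = 0 \<Longrightarrow> \<bar>1 / \<alpha> T j * \<xi> T \<omega> j powr (-1/q)\<bar> \<le> cf T \<omega>" by (rule cge)
            show "norm (\<chi> j. (\<theta>hat T \<omega> $ j - \<theta>s$j) / \<alpha> T j) < Mb + 1"
              using nA unfolding uhat_eq by simp
            fix u v
            assume u: "\<theta>s + diag_mat (\<alpha> T) *v u \<in> closure \<Theta>" and v: "\<theta>s + diag_mat (\<alpha> T) *v v \<in> closure \<Theta>"
              and nu: "norm u < Mb + 1" and nv: "norm v < Mb + 1" and uv: "u \<noteq> v"
            let ?X = "{(u, v). u \<in> U_set \<Theta> \<theta>s \<alpha> T \<and> v \<in> U_set \<Theta> \<theta>s \<alpha> T \<and>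
                             norm u < Mb + 1 \<and> norm v < Mb + 1 \<and> u \<noteq> v}"
            have inX: "(u, v) \<in> ?X" using u v nu nv uv by (simp add: U_set_def a_mat_def)
            have "ereal (\<bar>H T \<omega> (\<theta>s + diag_mat (\<alpha> T) *v u) - H T \<omega> (\<theta>s + diag_mat (\<alpha> T) *v v)\<bar> /
                norm (u - v) powr q * cf T \<omega> powr q)
              \<le> (SUP uv \<in> ?X.
             ereal (\<bar>H T \<omega> (\<theta>s + a_mat \<alpha> T *v fst uv) - H T \<omega> (\<theta>s + a_mat \<alpha> T *v snd uv)\<bar>
                    / norm (fst uv - snd uv) powr q
                    * spec_norm (block00 \<theta>s (G_mat q \<theta>s \<alpha> \<xi> T \<omega>)) powr q))"
              using SUP_upper[OF inX, of "\<lambda>uv. ereal (\<bar>H T \<omega> (\<theta>s + a_mat \<alpha> T *v fst uv) - H T \<omega> (\<theta>s + a_mat \<alpha> T *v snd uv)\<bar>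
                    / norm (fst uv - snd uv) powr q
                    * spec_norm (block00 \<theta>s (G_mat q \<theta>s \<alpha> \<xi> T \<omega>)) powr q)"]
              by (simp add: a_mat_def cf_def)
            also have "\<dots> \<le> ereal eps" using nB by simp
            finally show "\<bar>H T \<omega> (\<theta>s + diag_mat (\<alpha> T) *v u) - H T \<omega> (\<theta>s + diag_mat (\<alpha> T) *v v)\<bar> /
                norm (u - v) powr q * cf T \<omega> powr q \<le> lam / (2 * real CARD('n) powr q)"
              unfolding eps_def by simp
          qed
          then show False using \<omega> by (auto simp: bad_def)
        qed
      qed
      have "measure M (bad T) \<le> measure M (Aset \<union> Bset)"
        by (rule finite_measure_mono[OF sub]) (use Ameas Bmeas in auto)
      also have "\<dots> \<le> measure M Aset + measure M Bset"
        by (rule measure_Un_le[OF Ameas Bmeas])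
      also have "\<dots> < e/2 + e/2"
        using T0b[of T] elim(1) elim(3) unfolding Aset_def Bset_def by (intro add_strict_mono) auto
      finally show ?case by simp
    qed
  qed
  have "((\<lambda>T. 1 - measure M (bad T)) \<longlongrightarrow> 1 - 0) (along TT)"
    by (intro tendsto_diff tendsto_const lim0)
  then show ?thesis
    unfolding good_eq using prob_compl[OF bad_meas] by simp
qed

end
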